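(* Let $f:\mathbb{R}^d\to\mathbb{R}$ satisfy $|f(x)|\le1$ for all $x$, fix $\ell>0$, and let $f_\sim$ satisfy $\sup_x|f(x)-f_\sim(x)|\le\varepsilon$. Let $y\in\mathbb{R}^d$ and $m\ge1$. Draw independently $x_1,\dots,x_m\sim\mathcal N(0,\ell^2I_d)$, let $c_j=f_\sim(x_j)e^{-\mathrm{i}y^\top x_j}$ and $V=\ell^d\cdot\frac{c_1+\dots+c_m}{m}$. Then for any $\delta\in(0,1)$, with probability at least $1-\delta$, $$\big|V-\widehat{f^{(\ell)}}(y)\big|\le 4\ell^d\Big(\varepsilon+\sqrt{\tfrac{2\log(8/\delta)}{m}}\Big).$$
   Context: Fourier transform: $\widehat g(y)=(2\pi)^{-d/2}\int_{\mathbb{R}^d}e^{-\mathrm{i}y^\top x}g(x)\,dx$. $f^{(\ell)}(x)=f(x)e^{-\|x\|^2/(2\ell^2)}$. *)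

theory Defs
  imports "HOL-Probability.Probability"
begin

definition fourier :: "('a::euclidean_space \<Rightarrow> complex) \<Rightarrow> 'a \<Rightarrow> complex" where
  "fourier g y = complex_of_real ((2 * pi) powr (- real DIM('a) / 2)) *
      (LINT x|lborel. cis (- (y \<bullet> x)) * g x)"

definition damp :: "real \<Rightarrow> ('a::euclidean_space \<Rightarrow> real) \<Rightarrow> 'a \<Rightarrow> real" where
  "damp l f x = f x * exp (- (norm x ^ 2) / (2 * l ^ 2))"

definition gaussian_measure :: "real \<Rightarrow> 'a::euclidean_space measure" where
  "gaussian_measure l = density lborel
     (\<lambda>x. ennreal ((2 * pi * l ^ 2) powr (- real DIM('a) / 2) * exp (- (norm x ^ 2) / (2 * l ^ 2))))"

definition estimator :: "real \<Rightarrow> ('a::euclidean_space \<Rightarrow> real) \<Rightarrow> 'a \<Rightarrow> nat \<Rightarrow> (nat \<Rightarrow> 'a) \<Rightarrow> complex" where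
  "estimator l fs y m xs = complex_of_real (l ^ DIM('a)) *
      ((\<Sum>j<m. complex_of_real (fs (xs j)) * cis (- (y \<bullet> xs j))) / of_nat m)"

end

theory Submission
  imports Defs
begin

lemma gauss_density_prod:
  fixes x :: "'a::euclidean_space" assumes l: "l > 0"
  shows "(2 * pi * l ^ 2) powr (- real DIM('a) / 2) * exp (- (norm x ^ 2) / (2 * l ^ 2))
     = (\<Prod>b\<in>Basis. normal_density 0 l (x \<bullet> b))"
proof -
  have n: "norm x ^ 2 = (\<Sum>b\<in>Basis. (x \<bullet> b)^2)"
    unfolding power2_norm_eq_inner by (subst euclidean_inner) (simp add: power2_eq_square)
  have e: "exp (- (norm x ^ 2) / (2 * l ^ 2)) = (\<Prod>b\<in>Basis. exp (- ((x \<bullet> b)^2) / (2 * l^2)))"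
    unfolding n by (simp add: sum_divide_distrib[symmetric] exp_sum[symmetric] sum_negf)
  have pos: "2 * pi * l^2 > 0" using l by simp
  have c: "(2 * pi * l ^ 2) powr (- real DIM('a) / 2) = (1 / sqrt (2 * pi * l^2)) ^ DIM('a)"
  proof -
    have "(1 / sqrt (2 * pi * l^2)) ^ DIM('a) = ((2 * pi * l^2) powr (- (1/2))) ^ DIM('a)"
    proof -
      have "(2 * pi * l^2) powr (- (1/2)) = inverse ((2 * pi * l^2) powr (1/2))"
        by (rule powr_minus)
      also have "\<dots> = 1 / sqrt (2 * pi * l^2)" using pos by (simp only: powr_half_sqrt less_imp_le inverse_eq_divide)
      finally show ?thesis by simp
    qed
    also have "\<dots> = ((2 * pi * l^2) powr (- (1/2))) powr (real DIM('a))"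
      by (rule powr_realpow[symmetric]) (use pos l in simp)
    also have "\<dots> = (2 * pi * l ^ 2) powr (- real DIM('a) / 2)"
      unfolding powr_powr by (simp add: field_simps)
    finally show ?thesis by simp
  qed
  show ?thesis unfolding c e normal_density_def
    by (simp only: prod.distrib prod_constant diff_0_right)
qed

lemma gauss_prob: "l > 0 \<Longrightarrow> prob_space (gaussian_measure l :: 'a::euclidean_space measure)"
proof (rule prob_spaceI)
  assume l: "l > 0"
  have "emeasure (gaussian_measure l :: 'a measure) (space (gaussian_measure l)) =
     (\<integral>\<^sup>+x. ennreal (\<Prod>b\<in>Basis. normal_density 0 l (x \<bullet> b)) \<partial>(lborel::'a measure))"
    unfolding gaussian_measure_def
    apply (subst emeasure_density) apply simp apply simp apply (rule nn_integral_cong) apply (simp only: space_density indicator_simps mult_1_right)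
    apply (rule arg_cong[where f=ennreal]) using gauss_density_prod[OF l, where 'a='a] by simp
  also have "\<dots> = (\<integral>\<^sup>+x. (\<Prod>b\<in>Basis. ennreal (normal_density 0 l (x \<bullet> b))) \<partial>(lborel::'a measure))"
    by (simp add: prod_ennreal)
  also have "\<dots> = (\<Prod>b\<in>(Basis::'a set). (\<integral>\<^sup>+x. ennreal (normal_density 0 l x) \<partial>lborel))"
    by (rule nn_integral_lborel_prod) auto
  also have "(\<integral>\<^sup>+x. ennreal (normal_density 0 l x) \<partial>lborel) = 1"
    using l by (subst nn_integral_eq_integral) auto
  finally show "emeasure (gaussian_measure l :: 'a measure) (space (gaussian_measure l)) = 1" by simp
qed


lemma sets_gauss[measurable_cong, simp]: "sets (gaussian_measure l :: 'a::euclidean_space measure) = sets borel"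
  unfolding gaussian_measure_def by simp

lemma fourier_eq:
  fixes f :: "'a::euclidean_space \<Rightarrow> real" and y :: 'a
  assumes l: "l > 0" and fm: "f \<in> borel_measurable borel"
  shows "fourier (\<lambda>x. complex_of_real (damp l f x)) y =
     complex_of_real (l ^ DIM('a)) * (\<integral>x. complex_of_real (f x) * cis (- (y \<bullet> x)) \<partial>gaussian_measure l)"
proof -
  note fm[measurable]
  have cm[measurable]: "(\<lambda>x. cis (- (y \<bullet> x))) \<in> borel_measurable borel"
    by (intro borel_measurable_continuous_onI continuous_intros)
  define c where "c = (2 * pi * l ^ 2) powr (- real DIM('a) / 2)"
  define e where "e x = exp (- (norm x ^ 2) / (2 * l ^ 2))" for x :: 'a
  have "(\<integral>x. complex_of_real (f x) * cis (- (y \<bullet> x)) \<partial>gaussian_measure l) =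
     (\<integral>x. (c * e x) *\<^sub>R (complex_of_real (f x) * cis (- (y \<bullet> x))) \<partial>lborel)"
    unfolding gaussian_measure_def c_def e_def
    apply (subst integral_density)
    apply (simp only: measurable_lborel2)
    apply measurable
    done
  also have "\<dots> = (\<integral>x. complex_of_real c * (cis (- (y \<bullet> x)) * complex_of_real (damp l f x)) \<partial>lborel)"
    by (rule Bochner_Integration.integral_cong) (auto simp: damp_def e_def scaleR_conv_of_real algebra_simps)
  also have "\<dots> = complex_of_real c * (LINT x|lborel. cis (- (y \<bullet> x)) * complex_of_real (damp l f x))"
    by (rule integral_mult_right_zero)
  finally have 1: "(\<integral>x. complex_of_real (f x) * cis (- (y \<bullet> x)) \<partial>gaussian_measure l) =
     complex_of_real c * (LINT x|lborel. cis (- (y \<bullet> x)) * complex_of_real (damp l f x))" .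
  have 2: "l ^ DIM('a) * c = (2 * pi) powr (- real DIM('a) / 2)"
  proof -
    have "c = (2 * pi) powr (- real DIM('a) / 2) * (l ^ 2) powr (- real DIM('a) / 2)"
      unfolding c_def using l by (simp add: powr_mult)
    also have "(l ^ 2) powr (- real DIM('a) / 2) = l powr (- real DIM('a))"
    proof -
      have "(l ^ 2) powr (- real DIM('a) / 2) = (l powr 2) powr (- real DIM('a) / 2)"
        using l by simp
      also have "\<dots> = l powr (2 * (- real DIM('a) / 2))" by (rule powr_powr)
      finally show ?thesis by simp
    qed
    finally have "l ^ DIM('a) * c = (2 * pi) powr (- real DIM('a) / 2) * (l powr real DIM('a) * l powr (- real DIM('a)))"
      using l by (simp add: powr_realpow)
    also have "l powr real DIM('a) * l powr (- real DIM('a)) = 1"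
      using l by (simp add: powr_add[symmetric])
    finally show ?thesis by simp
  qed
  have 3: "complex_of_real ((2 * pi) powr (- real DIM('a) / 2)) = complex_of_real (l ^ DIM('a)) * complex_of_real c"
    by (simp only: 2 [symmetric] of_real_mult)
  show ?thesis unfolding 1 fourier_def 3
    by (simp only: mult.assoc)
qed


theorem claim7p1:
  fixes f fs :: "'a::euclidean_space \<Rightarrow> real"
    and l \<epsilon> \<delta> :: real and y :: 'a and m :: nat
  assumes f_meas: "f \<in> borel_measurable borel"
    and fs_meas: "fs \<in> borel_measurable borel"
    and f_bound: "\<forall>x. \<bar>f x\<bar> \<le> 1"
    and l_pos: "l > 0"
    and approx: "\<forall>x. \<bar>f x - fs x\<bar> \<le> \<epsilon>"
    and m_pos: "m \<ge> 1"
    and \<delta>_pos: "0 < \<delta>" and \<delta>_lt: "\<delta> < 1"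
  shows "measure (PiM {..<m} (\<lambda>_. gaussian_measure l))
           {xs \<in> space (PiM {..<m} (\<lambda>_. gaussian_measure l)).
              cmod (estimator l fs y m xs - fourier (\<lambda>x. complex_of_real (damp l f x)) y)
                \<le> 4 * l ^ DIM('a) * (\<epsilon> + sqrt (2 * ln (8 / \<delta>) / real m))}
         \<ge> 1 - \<delta>"
proof -
  note [measurable] = f_meas fs_meas
  define G where "G = (gaussian_measure l :: 'a measure)"
  define P where "P = PiM {..<m} (\<lambda>_. G)"
  have Gp: "prob_space G" unfolding G_def by (rule gauss_prob[OF l_pos])
  interpret G: prob_space G by (rule Gp)
  interpret P: prob_space P unfolding P_def by (rule prob_space_PiM) (rule Gp)
  have sG[measurable_cong]: "sets G = sets borel" unfolding G_def by simp
  have cm[measurable]: "(\<lambda>x. cis (- (y \<bullet> x))) \<in> borel_measurable borel"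
    by (intro borel_measurable_continuous_onI continuous_intros)
  define gR where "gR x = f x * cos (y \<bullet> x)" for x
  define gI where "gI x = - f x * sin (y \<bullet> x)" for x
  define g where "g x = complex_of_real (f x) * cis (- (y \<bullet> x))" for x
  have gRm[measurable]: "gR \<in> borel_measurable borel" unfolding gR_def by measurable
  have gIm[measurable]: "gI \<in> borel_measurable borel" unfolding gI_def by measurable
  have gm[measurable]: "g \<in> borel_measurable borel" unfolding g_def by measurable
  have g_eq: "g x = Complex (gR x) (gI x)" for x
    unfolding g_def gR_def gI_def by (simp add: complex_eq_iff cis.sel)
  have gR_b: "gR x \<in> {-1..1}" for x
  proof -
    have "\<bar>gR x\<bar> \<le> 1" unfolding gR_def abs_mult
      using f_bound abs_cos_le_one[of "y \<bullet> x"] by (simp add: mult_le_one)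
    then show ?thesis by auto
  qed
  have gI_b: "gI x \<in> {-1..1}" for x
  proof -
    have "\<bar>gI x\<bar> \<le> 1" unfolding gI_def abs_mult abs_minus
      using f_bound abs_sin_le_one[of "y \<bullet> x"] by (simp add: mult_le_one)
    then show ?thesis by auto
  qed
  have g_int: "integrable G g"
    by (rule G.integrable_const_bound[where B=1]) (auto simp: g_def norm_mult f_bound)
  define \<mu>R where "\<mu>R = G.expectation gR"
  define \<mu>I where "\<mu>I = G.expectation gI"
  have Eg: "G.expectation g = Complex \<mu>R \<mu>I"
  proof -
    have "Re (G.expectation g) = \<mu>R"
      using integral_Re[OF g_int] unfolding \<mu>R_def by (simp add: g_eq)
    moreover have "Im (G.expectation g) = \<mu>I"
      using integral_Im[OF g_int] unfolding \<mu>I_def by (simp add: g_eq)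
    ultimately show ?thesis by (simp add: complex_eq_iff)
  qed
  have F: "fourier (\<lambda>x. complex_of_real (damp l f x)) y = complex_of_real (l ^ DIM('a)) * Complex \<mu>R \<mu>I"
    using fourier_eq[OF l_pos f_meas, of y] Eg unfolding G_def g_def by simp
  have eps0: "\<epsilon> \<ge> 0" using approx by (meson abs_ge_zero order_trans)
  define s where "s = sqrt (2 * ln (8 / \<delta>) / real m)"
  have mpos: "real m > 0" using m_pos by simp
  have ln8: "ln (8 / \<delta>) > 0" using \<delta>_pos \<delta>_lt by simp
  have s0: "s \<ge> 0" unfolding s_def using mpos ln8 by simp
  have ms2: "real m * s^2 = 2 * ln (8 / \<delta>)" unfolding s_def using mpos ln8 by simp
  have comp: "distr P G (\<lambda>xs. xs i) = G" if "i < m" for i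
    unfolding P_def by (rule distr_PiM_component) (use that Gp in auto)
  have compm[measurable]: "(\<lambda>xs. xs i) \<in> measurable P G" if "i < m" for i
    unfolding P_def using that by (intro measurable_component_singleton) auto
  have distr_h: "distr P borel (\<lambda>xs. h (xs i)) = distr G borel h"
    if "i < m" "h \<in> borel_measurable borel" for i h
  proof -
    have hm: "h \<in> borel_measurable G" using that(2) by (simp add: measurable_cong_sets[OF sG refl])
    have "distr P borel (\<lambda>xs. h (xs i)) = distr (distr P G (\<lambda>xs. xs i)) borel h"
      by (subst distr_distr[OF hm compm[OF that(1)]]) (simp add: comp_def)
    then show ?thesis using comp[OF that(1)] by simp
  qed
  have ind0: "P.indep_vars (\<lambda>_. G) (\<lambda>i xs. xs i) {..<m}"
  proof (subst P.indep_vars_iff_distr_eq_PiM')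
    show "{..<m} \<noteq> {}" using m_pos by (auto simp: lessThan_empty_iff)
    show "\<And>i. i \<in> {..<m} \<Longrightarrow> (\<lambda>xs. xs i) \<in> measurable P G" using compm by simp
    have "distr P (PiM {..<m} (\<lambda>_. G)) (\<lambda>x. \<lambda>i\<in>{..<m}. x i) = distr P P (\<lambda>x. x)"
      by (rule distr_cong) (auto simp: P_def space_PiM PiE_restrict)
    also have "\<dots> = P" by simp
    also have "P = PiM {..<m} (\<lambda>i. distr P G (\<lambda>xs. xs i))"
      unfolding P_def by (rule PiM_cong) (auto simp: comp[unfolded P_def])
    finally show "distr P (PiM {..<m} (\<lambda>_. G)) (\<lambda>x. \<lambda>i\<in>{..<m}. x i) = PiM {..<m} (\<lambda>i. distr P G (\<lambda>xs. xs i))" .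
  qed
  have hoeff: "P.prob {xs \<in> space P. \<bar>(\<Sum>i\<in>{..<m}. h (xs i)) / real (card {..<m}) - G.expectation h\<bar> \<ge> s} \<le> \<delta> / 4"
    if hm[measurable]: "h \<in> borel_measurable borel" and hb: "\<And>x. h x \<in> {-1..1}" for h
  proof -
    have hmG: "h \<in> borel_measurable G" using hm by (simp add: measurable_cong_sets[OF sG refl])
    have m0: "0 < m" using m_pos by simp
    interpret H: Hoeffding_ineq_iid P "{..<m}" "\<lambda>i xs. h (xs i)" "\<lambda>xs. h (xs 0)" "-1" 1
      "P.expectation (\<lambda>xs. h (xs 0))"
      apply unfold_locales
      subgoal by simp
      subgoal using P.indep_vars_compose2[OF ind0, where Y="\<lambda>_. h" and N="\<lambda>_. borel"] hmG by simp
      subgoal for i using distr_h[of i h] distr_h[of 0 h] m0 by simp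
      subgoal using measurable_compose[OF compm[OF m0] hmG] by simp
      subgoal using hb by simp
      subgoal by (rule reflexive)
      done
    have EH: "P.expectation (\<lambda>xs. h (xs 0)) = G.expectation h"
    proof -
      have "P.expectation (\<lambda>xs. h (xs 0)) = integral\<^sup>L (distr P G (\<lambda>xs. xs 0)) h"
        by (rule integral_distr[symmetric]) (use m0 hmG in auto)
      then show ?thesis using comp[OF m0] by simp
    qed
    have "P.prob {xs \<in> space P. \<bar>(\<Sum>i\<in>{..<m}. h (xs i)) / real (card {..<m}) - G.expectation h\<bar> \<ge> s}
       \<le> 2 * exp (- 2 * real (card {..<m}) * s\<^sup>2 / (1 - - 1)\<^sup>2)"
      using H.Hoeffding_ineq_abs_ge'[OF s0] m0 unfolding EH by (simp add: lessThan_empty_iff)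
    also have "\<dots> = 2 * exp (- ln (8 / \<delta>))" using ms2 by simp
    also have "\<dots> = \<delta> / 4" using \<delta>_pos by (simp add: exp_minus)
    finally show ?thesis .
  qed
  define Fv where "Fv = fourier (\<lambda>x. complex_of_real (damp l f x)) y"
  define K where "K = 4 * l ^ DIM('a) * (\<epsilon> + s)"
  define A where "A = {xs \<in> space P. cmod (estimator l fs y m xs - Fv) \<le> K}"
  define BR where "BR = {xs \<in> space P. \<bar>(\<Sum>i\<in>{..<m}. gR (xs i)) / real (card {..<m}) - G.expectation gR\<bar> \<ge> s}"
  define BI where "BI = {xs \<in> space P. \<bar>(\<Sum>i\<in>{..<m}. gI (xs i)) / real (card {..<m}) - G.expectation gI\<bar> \<ge> s}"
  have PR: "P.prob BR \<le> \<delta> / 4" unfolding BR_def by (rule hoeff[OF gRm gR_b])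
  have PI: "P.prob BI \<le> \<delta> / 4" unfolding BI_def by (rule hoeff[OF gIm gI_b])
  have compm'[measurable]: "(\<lambda>xs. xs i) \<in> measurable P borel" if "i \<in> {..<m}" for i
    using compm[of i] that by (simp add: measurable_cong_sets[OF refl sG])
  have A_meas: "A \<in> sets P" unfolding A_def estimator_def by measurable
  have BR_meas: "BR \<in> sets P" unfolding BR_def by measurable
  have BI_meas: "BI \<in> sets P" unfolding BI_def by measurable
  have pt: "cmod (estimator l fs y m xs - Fv) \<le> K"
    if "\<bar>(\<Sum>i\<in>{..<m}. gR (xs i)) / real (card {..<m}) - \<mu>R\<bar> < s"
       "\<bar>(\<Sum>i\<in>{..<m}. gI (xs i)) / real (card {..<m}) - \<mu>I\<bar> < s" for xs
  proof -
    have hR: "\<bar>(\<Sum>i<m. gR (xs i)) / real m - \<mu>R\<bar> < s" using that(1) by simp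
    have hI: "\<bar>(\<Sum>i<m. gI (xs i)) / real m - \<mu>I\<bar> < s" using that(2) by simp
    define S where "S = (\<Sum>j<m. complex_of_real (fs (xs j)) * cis (- (y \<bullet> xs j)))"
    define T where "T = (\<Sum>j<m. g (xs j))"
    define D where "D = (\<Sum>j<m. complex_of_real (fs (xs j) - f (xs j)) * cis (- (y \<bullet> xs j)))"
    have SDT: "S = D + T" unfolding S_def D_def T_def g_def
      by (simp add: sum.distrib[symmetric] algebra_simps)
    have T_eq: "T = Complex (\<Sum>j<m. gR (xs j)) (\<Sum>j<m. gI (xs j))"
      unfolding T_def g_eq by (simp add: complex_eq_iff Re_sum Im_sum)
    have Dn: "cmod D \<le> real m * \<epsilon>"
    proof -
      have "cmod D \<le> (\<Sum>j<m. \<epsilon>)" unfolding D_def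
      proof (rule sum_norm_le)
        fix j
        have "\<bar>fs (xs j) - f (xs j)\<bar> \<le> \<epsilon>" using approx[rule_format, of "xs j"] by linarith
        then show "cmod (complex_of_real (fs (xs j) - f (xs j)) * cis (- (y \<bullet> xs j))) \<le> \<epsilon>"
          by (simp add: norm_mult of_real_diff[symmetric] del: of_real_diff)
      qed
      then show ?thesis by simp
    qed
    have est: "estimator l fs y m xs - Fv = complex_of_real (l ^ DIM('a)) * (D / of_nat m + (T / of_nat m - Complex \<mu>R \<mu>I))"
      unfolding estimator_def Fv_def F S_def[symmetric] SDT by (simp add: algebra_simps add_divide_distrib)
    have n1: "cmod (D / of_nat m) \<le> \<epsilon>"
      using Dn mpos by (simp add: norm_divide field_simps)
    have "cmod (T / of_nat m - Complex \<mu>R \<mu>I) \<le> \<bar>Re (T / of_nat m - Complex \<mu>R \<mu>I)\<bar> + \<bar>Im (T / of_nat m - Complex \<mu>R \<mu>I)\<bar>"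
      by (rule cmod_le)
    also have "\<dots> < s + s" using hR hI unfolding T_eq by (simp add: Re_divide_of_nat Im_divide_of_nat)
    finally have n2: "cmod (T / of_nat m - Complex \<mu>R \<mu>I) < 2 * s" by simp
    have "cmod (D / of_nat m + (T / of_nat m - Complex \<mu>R \<mu>I)) \<le> \<epsilon> + 2 * s"
      using norm_triangle_ineq[of "D / of_nat m" "T / of_nat m - Complex \<mu>R \<mu>I"] n1 n2 by linarith
    then have "cmod (estimator l fs y m xs - Fv) \<le> l ^ DIM('a) * (\<epsilon> + 2 * s)"
      unfolding est norm_mult norm_of_real abs_of_pos[OF zero_less_power[OF l_pos]]
      by (rule mult_left_mono) (use l_pos in simp_all)
    also have "\<dots> \<le> K" unfolding K_def
    proof -
      have "\<epsilon> + 2 * s \<le> 4 * (\<epsilon> + s)" using eps0 s0 by (simp add: algebra_simps)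
      then have "l ^ DIM('a) * (\<epsilon> + 2 * s) \<le> l ^ DIM('a) * (4 * (\<epsilon> + s))"
        by (rule mult_left_mono) (use l_pos in simp)
      then show "l ^ DIM('a) * (\<epsilon> + 2 * s) \<le> 4 * l ^ DIM('a) * (\<epsilon> + s)" by (simp only: mult_ac)
    qed
    finally show ?thesis .
  qed
  have sub: "space P - A \<subseteq> BR \<union> BI"
    using pt unfolding A_def BR_def BI_def \<mu>R_def \<mu>I_def by force
  have "P.prob (space P - A) \<le> P.prob (BR \<union> BI)"
    by (rule P.finite_measure_mono[OF sub]) (use BR_meas BI_meas in auto)
  also have "\<dots> \<le> P.prob BR + P.prob BI"
    by (rule measure_Un_le[OF BR_meas BI_meas])
  also have "\<dots> \<le> \<delta>" using PR PI \<delta>_pos by simp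
  finally have "P.prob (space P - A) \<le> \<delta>" .
  moreover have "P.prob (space P - A) = 1 - P.prob A" by (rule P.prob_compl[OF A_meas])
  ultimately have "P.prob A \<ge> 1 - \<delta>" by simp
  then show ?thesis unfolding A_def K_def s_def Fv_def P_def G_def by simp
qed
end
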